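(* Let $p$ be a prime and let $(\mathbb{K},|\cdot|_{\mathbb{K}})$ be a valued field with $\mathbb{Q}_p\subseteq\mathbb{K}$ such that the inclusion $\mathbb{Q}_p\hookrightarrow\mathbb{K}$ is continuous. Let $f:\mathbb{Q}_p\to\mathbb{K}$ be continuous, $n\ge0$, and $N\in\mathbb{N}$. If $\Delta_{p^N}^{n+1}f(x)=0$ for all $x\in\mathbb{Q}_p$, then for each $a\in\mathbb{Q}_p$ there exist constants $a_0,\dots,a_n\in\mathbb{K}$ such that $f(x)=a_0+a_1x+\cdots+a_nx^n$ for all $x\in a+p^N\mathbb{Z}_p$.
   Context: $\mathbb{Q}_p$ is the field of $p$-adic numbers, $\mathbb{Z}_p=\{x\in\mathbb{Q}_p:|x|_p\le1\}$, and $a+p^N\mathbb{Z}_p=\{a+p^Nz:z\in\mathbb{Z}_p\}$. $\Delta_h^{m}f(x)=\sum_{k=0}^{m}\binom{m}{k}(-1)^{m-k}f(x+kh)$. *)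

theory Defs
  imports Complex_Main "HOL-Computational_Algebra.Computational_Algebra"
begin

definition padic_val_rat :: "nat \<Rightarrow> rat \<Rightarrow> int" where
  "padic_val_rat p r =
     int (multiplicity (int p) (fst (quotient_of r))) -
     int (multiplicity (int p) (snd (quotient_of r)))"

definition padic_abs_rat :: "nat \<Rightarrow> rat \<Rightarrow> real" where
  "padic_abs_rat p r = (if r = 0 then 0 else real p powr (- real_of_int (padic_val_rat p r)))"

definition is_absval :: "('a::field \<Rightarrow> real) \<Rightarrow> bool" where
  "is_absval av \<longleftrightarrow>
     (\<forall>x. 0 \<le> av x) \<and> (\<forall>x. av x = 0 \<longleftrightarrow> x = 0) \<and>
     (\<forall>x y. av (x * y) = av x * av y) \<and> (\<forall>x y. av (x + y) \<le> av x + av y)"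

text \<open>(Q, av) is a model of Q_p: the completion of the rationals with respect to the
  p-adic absolute value (complete, extends the p-adic absolute value on Q, Q dense).\<close>
definition is_padic_field :: "nat \<Rightarrow> ('q::field_char_0 \<Rightarrow> real) \<Rightarrow> bool" where
  "is_padic_field p av \<longleftrightarrow>
     is_absval av \<and>
     (\<forall>r. av (of_rat r) = padic_abs_rat p r) \<and>
     (\<forall>x e. e > 0 \<longrightarrow> (\<exists>r. av (x - of_rat r) < e)) \<and>
     (\<forall>X :: nat \<Rightarrow> 'q.
        (\<forall>e>0. \<exists>M. \<forall>m\<ge>M. \<forall>n\<ge>M. av (X m - X n) < e) \<longrightarrow>
        (\<exists>L. \<forall>e>0. \<exists>M. \<forall>n\<ge>M. av (X n - L) < e))"

definition abs_continuous ::
  "('a \<Rightarrow> real) \<Rightarrow> ('b \<Rightarrow> real) \<Rightarrow> ('a::ab_group_add \<Rightarrow> 'b::ab_group_add) \<Rightarrow> bool" where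
  "abs_continuous avA avB g \<longleftrightarrow>
     (\<forall>x e. e > 0 \<longrightarrow> (\<exists>d>0. \<forall>y. avA (y - x) < d \<longrightarrow> avB (g y - g x) < e))"

definition field_embedding :: "('a::field \<Rightarrow> 'b::field) \<Rightarrow> bool" where
  "field_embedding i \<longleftrightarrow> inj i \<and> (\<forall>x y. i (x + y) = i x + i y) \<and>
     (\<forall>x y. i (x * y) = i x * i y) \<and> i 1 = 1"

definition fdiff :: "'a::semiring_1 \<Rightarrow> nat \<Rightarrow> ('a \<Rightarrow> 'b::ring_1) \<Rightarrow> 'a \<Rightarrow> 'b" where
  "fdiff h m f x = (\<Sum>k=0..m. of_nat (m choose k) * (-1) ^ (m - k) * f (x + of_nat k * h))"

end

theory Submission
  imports Defs "HOL-Number_Theory.Cong"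
begin


lemma av_basic:
  fixes av :: "'a::field \<Rightarrow> real"
  assumes "is_absval av"
  shows av_nonneg: "0 \<le> av x" and av_zero: "av 0 = 0" and av_mult: "av (x*y) = av x * av y"
    and av_tri: "av (x+y) \<le> av x + av y" and av_one: "av 1 = 1"
    and av_minus: "av (-x) = av x" and av_eq0: "av x = 0 \<longleftrightarrow> x = 0"
proof -
  note A = assms[unfolded is_absval_def]
  show "0 \<le> av x" "av 0 = 0" "av (x*y) = av x * av y" "av (x+y) \<le> av x + av y"
       "av x = 0 \<longleftrightarrow> x = 0" using A by auto
  have "av 1 = av 1 * av 1" using A by (metis mult_1)
  moreover have "av 1 \<noteq> 0" using A by auto
  ultimately show o: "av 1 = 1" by (metis mult_cancel_left1)
  have "av (-1) * av (-1) = 1" using A o by (metis mult_minus1 minus_minus)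
  moreover have "av (-1) \<ge> 0" using A by auto
  ultimately have "av (-1) = 1" by (metis abs_of_nonneg abs_square_eq_1 power2_eq_square)
  then show "av (-x) = av x" using A by (metis mult_minus1 mult_1 mult_minus_left)
qed

lemma av_tri_sub:
  fixes av :: "'a::field \<Rightarrow> real"
  assumes "is_absval av"
  shows "av (a - c) \<le> av (a - b) + av (b - c)"
  using av_tri[OF assms, of "a-b" "b-c"] by simp

lemma av_sub_comm:
  fixes av :: "'a::field \<Rightarrow> real"
  assumes "is_absval av"
  shows "av (a - b) = av (b - a)"
  using av_minus[OF assms, of "a-b"] by simp

lemma av_power:
  fixes av :: "'a::field \<Rightarrow> real"
  assumes "is_absval av"
  shows "av (x ^ n) = av x ^ n"
  by (induction n) (auto simp: av_one[OF assms] av_mult[OF assms])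

lemma av_divide:
  fixes av :: "'a::field \<Rightarrow> real"
  assumes "is_absval av"
  shows "av (x / y) = av x / av y"
proof (cases "y = 0")
  case True then show ?thesis by (simp add: av_zero[OF assms])
next
  case False
  have "av (x/y) * av y = av x" using False by (metis av_mult[OF assms] nonzero_eq_divide_eq)
  moreover have "av y > 0" using False av_nonneg[OF assms, of y] av_eq0[OF assms, of y] by auto
  ultimately show ?thesis by (simp add: field_simps)
qed



definition DD :: "nat \<Rightarrow> (nat \<Rightarrow> 'b::comm_ring_1) \<Rightarrow> nat \<Rightarrow> 'b" where
  "DD m g j = (\<Sum>k\<le>m. of_nat (m choose k) * (-1) ^ (m - k) * g (j + k))"

lemma DD_Suc: "DD (Suc m) g j = DD m g (Suc j) - DD m g j"
proof -
  have "DD (Suc m) g j = (-1)^(Suc m) * g j +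
     (\<Sum>k\<le>m. of_nat (Suc m choose Suc k) * (-1) ^ (m - k) * g (j + Suc k))"
    unfolding DD_def by (subst sum.atMost_Suc_shift) simp
  also have "(\<Sum>k\<le>m. of_nat (Suc m choose Suc k) * (-1) ^ (m - k) * g (j + Suc k)) =
     (\<Sum>k\<le>m. of_nat (m choose k) * (-1) ^ (m - k) * g (Suc j + k)) +
     (\<Sum>k\<le>m. of_nat (m choose Suc k) * (-1) ^ (m - k) * g (j + Suc k))"
    by (simp add: sum.distrib[symmetric] algebra_simps)
  also have "(\<Sum>k\<le>m. of_nat (m choose k) * (-1) ^ (m - k) * g (Suc j + k)) = DD m g (Suc j)"
    unfolding DD_def ..
  also have "(-1)^(Suc m) * g j + (DD m g (Suc j) +
     (\<Sum>k\<le>m. of_nat (m choose Suc k) * (-1) ^ (m - k) * g (j + Suc k)))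
     = DD m g (Suc j) - DD m g j"
  proof -
    have "DD m g j = (-1)^m * g j + (\<Sum>k<m. of_nat (m choose Suc k) * (-1) ^ (m - Suc k) * g (j + Suc k))"
    proof (cases m)
      case 0 then show ?thesis by (simp add: DD_def)
    next
      case (Suc m')
      show ?thesis unfolding DD_def Suc
        by (subst sum.atMost_Suc_shift) (simp add: lessThan_Suc_atMost)
    qed
    moreover have "(\<Sum>k\<le>m. of_nat (m choose Suc k) * (-1) ^ (m - k) * g (j + Suc k))
        = - (\<Sum>k<m. of_nat (m choose Suc k) * (-1) ^ (m - Suc k) * g (j + Suc k))"
    proof -
      have "(\<Sum>k\<le>m. of_nat (m choose Suc k) * (-1) ^ (m - k) * g (j + Suc k))
          = (\<Sum>k<m. of_nat (m choose Suc k) * (-1) ^ (m - k) * g (j + Suc k))"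
        by (simp add: lessThan_Suc_atMost[symmetric] binomial_eq_0)
      also have "\<dots> = (\<Sum>k<m. - (of_nat (m choose Suc k) * (-1) ^ (m - Suc k) * g (j + Suc k)))"
      proof (rule sum.cong[OF refl])
        fix k assume "k \<in> {..<m}"
        then have "m - k = Suc (m - Suc k)" by auto
        then show "of_nat (m choose Suc k) * (-1) ^ (m - k) * g (j + Suc k) =
          - (of_nat (m choose Suc k) * (-1) ^ (m - Suc k) * g (j + Suc k))" by simp
      qed
      finally show ?thesis by (simp add: sum_negf)
    qed
    ultimately show ?thesis by simp
  qed
  finally show ?thesis by simp
qed

lemma DD_diff: "DD m (\<lambda>i. g (Suc i) - g i) j = DD m g (Suc j) - DD m g j"
  unfolding DD_def by (simp add: sum_subtractf algebra_simps)

lemma DD_Suc': "DD (Suc m) g j = DD m (\<lambda>i. g (Suc i) - g i) j"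
  using DD_Suc DD_diff by metis



lemma DD_zero_binom:
  fixes g :: "nat \<Rightarrow> 'b::comm_ring_1"
  assumes "\<forall>j. DD (Suc n) g j = 0"
  shows "\<exists>c. \<forall>j. g j = (\<Sum>i\<le>n. c i * of_nat (j choose i))"
  using assms
proof (induction n arbitrary: g)
  case 0
  have "\<forall>j. g (Suc j) = g j" using 0 by (simp add: DD_def)
  then have "\<forall>j. g j = g 0" by (intro allI, induct_tac j) auto
  then show ?case by (intro exI[of _ "\<lambda>_. g 0"]) simp
next
  case (Suc n)
  have "\<forall>j. DD (Suc n) (\<lambda>i. g (Suc i) - g i) j = 0" using Suc.prems DD_Suc' by metis
  from Suc.IH[OF this] obtain c where c: "\<forall>j. g (Suc j) - g j = (\<Sum>i\<le>n. c i * of_nat (j choose i))"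
    by blast
  define c' where "c' i = (case i of 0 \<Rightarrow> g 0 | Suc i' \<Rightarrow> c i')" for i
  have "g j = (\<Sum>i\<le>Suc n. c' i * of_nat (j choose i))" for j
  proof -
    have "g j = g 0 + (\<Sum>t<j. g (Suc t) - g t)" by (simp add: sum_lessThan_telescope)
    also have "(\<Sum>t<j. g (Suc t) - g t) = (\<Sum>t<j. \<Sum>i\<le>n. c i * of_nat (t choose i))"
      using c by simp
    also have "\<dots> = (\<Sum>i\<le>n. c i * of_nat (\<Sum>t<j. t choose i))"
      by (subst sum.swap) (simp add: sum_distrib_left)
    also have "(\<Sum>i\<le>n. c i * of_nat (\<Sum>t<j. t choose i)) = (\<Sum>i\<le>n. c i * of_nat (j choose Suc i))"
    proof (rule sum.cong[OF refl])
      fix i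
      have "(\<Sum>t<j. t choose i) = j choose Suc i"
      proof (cases j)
        case 0 then show ?thesis by simp
      next
        case (Suc j') then show ?thesis by (simp add: lessThan_Suc_atMost sum_choose_upper)
      qed
      then show "c i * of_nat (\<Sum>t<j. t choose i) = c i * of_nat (j choose Suc i)" by simp
    qed
    also have "g 0 + (\<Sum>i\<le>n. c i * of_nat (j choose Suc i)) = (\<Sum>i\<le>Suc n. c' i * of_nat (j choose i))"
      by (subst sum.atMost_Suc_shift) (simp add: c'_def)
    finally show ?thesis .
  qed
  then show ?case by blast
qed

lemma binom_poly:
  fixes dummy :: "'k::field"
  assumes ch: "\<And>n. (of_nat (Suc n) :: 'k) \<noteq> 0"
  shows "\<exists>B :: 'k poly. degree B \<le> i \<and> (\<forall>k. poly B (of_nat k) = of_nat (k choose i))"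
proof (induction i)
  case 0
  show ?case by (intro exI[of _ 1]) simp
next
  case (Suc i)
  then obtain B :: "'k poly" where B: "degree B \<le> i" "\<forall>k. poly B (of_nat k) = of_nat (k choose i)" by blast
  define B' where "B' = smult (1 / of_nat (Suc i)) (B * [:- of_nat i, 1:])"
  have "degree B' \<le> Suc i"
  proof -
    have "degree (B * [:- of_nat i, 1:]) \<le> degree B + degree [:- of_nat i, 1::'k:]"
      by (rule degree_mult_le)
    also have "degree [:- of_nat i, 1::'k:] = 1" by simp
    finally have "degree (B * [:- of_nat i, 1:]) \<le> Suc i" using B(1) by simp
    then show ?thesis unfolding B'_def using degree_smult_le le_trans by blast
  qed
  moreover have "poly B' (of_nat k) = of_nat (k choose Suc i)" for k
  proof -
    have key: "Suc i * (k choose Suc i) = (k - i) * (k choose i)"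
      using binomial_absorption[of i k] binomial_absorb_comp[of k i] by simp
    have "(of_nat (k choose i) :: 'k) * (of_nat k - of_nat i) = of_nat ((k - i) * (k choose i))"
    proof (cases "i \<le> k")
      case True then show ?thesis by (simp add: of_nat_diff)
    next
      case False then show ?thesis by (simp add: binomial_eq_0)
    qed
    also have "\<dots> = of_nat (Suc i) * of_nat (k choose Suc i)" by (simp only: key[symmetric] of_nat_mult)
    finally have "(of_nat (k choose i) :: 'k) * (of_nat k - of_nat i) = of_nat (Suc i) * of_nat (k choose Suc i)" .
    then show ?thesis unfolding B'_def using B(2) ch[of i]
      by (simp add: field_simps del: of_nat_Suc)
  qed
  ultimately show ?case by blast
qed



lemma padic_abs_int:
  assumes "prime p" "m \<noteq> 0"
  shows "padic_abs_rat p (of_int m) = real p powr (- real (multiplicity (int p) m))"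
  using assms by (simp add: padic_abs_rat_def padic_val_rat_def quotient_of_int)

lemma absQ_of_int:
  fixes absQ :: "'q::field_char_0 \<Rightarrow> real"
  assumes "prime p" "is_padic_field p absQ"
  shows "absQ (of_int m) = padic_abs_rat p (of_int m)"
  using assms unfolding is_padic_field_def by (metis of_rat_of_int_eq)

lemma absQ_int_le1:
  fixes absQ :: "'q::field_char_0 \<Rightarrow> real"
  assumes "prime p" "is_padic_field p absQ"
  shows "absQ (of_int m) \<le> 1"
proof (cases "m = 0")
  case True
  then show ?thesis using assms absQ_of_int[OF assms, of 0] by (simp add: padic_abs_rat_def)
next
  case False
  have p1: "real p \<ge> 1" using assms prime_gt_0_nat by (simp add: Suc_leI)
  have "real p powr (real (multiplicity (int p) m)) \<ge> 1"
    using p1 by (rule ge_one_powr_ge_zero) simp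
  then have "real p powr (- real (multiplicity (int p) m)) \<le> 1"
    by (simp add: powr_minus_divide divide_le_eq)
  then show ?thesis using absQ_of_int[OF assms] padic_abs_int[OF assms(1) False] by simp
qed

lemma absQ_p:
  fixes absQ :: "'q::field_char_0 \<Rightarrow> real"
  assumes "prime p" "is_padic_field p absQ"
  shows "absQ (of_nat p) = 1 / real p"
proof -
  have pi: "prime (int p)" using assms(1) by simp
  have "multiplicity (int p) (int p) = 1"
    using pi not_prime_unit[of "int p"] by (intro multiplicity_self) auto
  moreover have "int p \<noteq> 0" using pi by auto
  ultimately show ?thesis using absQ_of_int[OF assms, of "int p"] padic_abs_int[OF assms(1), of "int p"]
    by (simp add: powr_minus_divide)
qed

lemma absQ_unit:
  fixes absQ :: "'q::field_char_0 \<Rightarrow> real"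
  assumes "prime p" "is_padic_field p absQ" "\<not> int p dvd v"
  shows "absQ (of_int v) = 1"
proof -
  have pi: "prime (int p)" using assms(1) by simp
  have v0: "v \<noteq> 0" using assms(3) by auto
  have "multiplicity (int p) v = 0" using assms(3) v0 pi
    by (simp add: not_dvd_imp_multiplicity_0)
  then show ?thesis using absQ_of_int[OF assms(1,2), of v] padic_abs_int[OF assms(1) v0]
    using assms(1) prime_gt_0_nat by simp
qed

lemma absQ_density:
  fixes absQ :: "'q::field_char_0 \<Rightarrow> real"
  assumes P: "prime p" and Q: "is_padic_field p absQ" and z: "absQ z \<le> 1" and e: "e > 0"
  shows "\<exists>k::nat. absQ (z - of_nat k) < e"
proof -
  have av: "is_absval absQ" using Q by (simp add: is_padic_field_def)
  have p2: "real p \<ge> 2" using P prime_ge_2_nat by (metis of_nat_le_iff of_nat_numeral)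
  define d where "d = min (e/2) (1/2)"
  have d: "d > 0" "d \<le> e/2" "d \<le> 1/2" using e by (auto simp: d_def)
  obtain r where r: "absQ (z - of_rat r) < d" using Q d unfolding is_padic_field_def by blast
  show ?thesis
  proof (cases "r = 0")
    case True
    then show ?thesis using r d by (intro exI[of _ 0]) simp
  next
    case False
    obtain u v where uv: "quotient_of r = (u, v)" by (cases "quotient_of r")
    have v0: "v > 0" using uv quotient_of_denom_pos by blast
    have cop: "coprime u v" using uv quotient_of_coprime by blast
    have rdiv: "r = of_int u / of_int v" using uv quotient_of_div by blast
    have "absQ (of_rat r) \<le> absQ (of_rat r - z) + absQ z"
      using av_tri[OF av, of "of_rat r - z" z] by simp
    also have "absQ (of_rat r - z) = absQ (z - of_rat r)" by (rule av_sub_comm[OF av])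
    finally have "absQ (of_rat r) < real p" using r z d p2 by linarith
    then have "padic_abs_rat p r < real p" using Q by (simp add: is_padic_field_def)
    then have "real p powr (- real_of_int (padic_val_rat p r)) < real p powr 1"
      using False by (simp add: padic_abs_rat_def)
    then have "- real_of_int (padic_val_rat p r) < 1"
      using p2 by (subst (asm) powr_less_cancel_iff) auto
    then have vnn: "padic_val_rat p r \<ge> 0" by linarith
    have pi: "prime (int p)" using P by simp
    have ndv: "\<not> int p dvd v"
    proof
      assume pv: "int p dvd v"
      have nu: "\<not> is_unit (int p)" using pi not_prime_unit by blast
      have "multiplicity (int p) v > 0" using pv v0 nu multiplicity_gt_zero_iff[of v "int p"] by simp
      then have "multiplicity (int p) u > 0" using vnn uv by (simp add: padic_val_rat_def)
      then have "u \<noteq> 0" by auto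
      then have "int p dvd u" using nu multiplicity_gt_zero_iff[of u "int p"]
        \<open>multiplicity (int p) u > 0\<close> by simp
      with pv cop nu show False
        using coprime_common_divisor by blast
    qed
    obtain M where M: "(1 / real p) ^ M < e/2"
      using real_arch_pow_inv[of "e/2" "1/real p"] e p2 by auto
    have "coprime v (int p ^ M)" using ndv pi
    proof -
      have "coprime (int p) v" using pi ndv by (rule prime_imp_coprime)
      then have "coprime (int p ^ M) v" by simp
      then show ?thesis by (simp add: ac_simps)
    qed
    then obtain s where s: "[v * s = 1] (mod int p ^ M)" using cong_solve_coprime_int by blast
    define k where "k = nat ((u * s) mod (int p ^ M))"
    have kint: "int k = (u * s) mod (int p ^ M)" unfolding k_def using P
      by (simp add: prime_gt_0_nat)
    have "[int k * v = u * s * v] (mod int p ^ M)" unfolding kint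
      by (simp add: cong_def mod_mult_left_eq)
    moreover have "[u * s * v = u] (mod int p ^ M)"
      using cong_scalar_left[OF s, of u] by (simp add: ac_simps)
    ultimately have "[int k * v = u] (mod int p ^ M)" using cong_trans by blast
    then have "[u = int k * v] (mod int p ^ M)" by (rule cong_sym)
    then have "int p ^ M dvd u - int k * v" by (simp only: cong_iff_dvd_diff)
    then obtain w where w: "u - int k * v = int p ^ M * w" by blast
    have "of_rat r - (of_nat k :: 'q) = of_int (u - int k * v) / of_int v"
    proof -
      have rq: "(of_rat r :: 'q) = of_int u / of_int v" by (subst rdiv) (simp add: of_rat_divide)
      have "(of_int v :: 'q) \<noteq> 0" using v0 by simp
      then show ?thesis unfolding rq by (simp add: field_simps)
    qed
    also have "\<dots> = (of_nat p) ^ M * of_int w / of_int v" by (simp add: w)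
    finally have eq: "of_rat r - (of_nat k :: 'q) = (of_nat p) ^ M * of_int w / of_int v" .
    have "absQ (of_rat r - (of_nat k :: 'q)) = (1 / real p) ^ M * absQ (of_int w)"
      unfolding eq av_divide[OF av] av_mult[OF av] av_power[OF av] absQ_p[OF P Q]
        absQ_unit[OF P Q ndv] by simp
    also have "\<dots> \<le> (1 / real p) ^ M" using absQ_int_le1[OF P Q, of w] p2
      by (simp add: mult_left_le)
    finally have "absQ (of_rat r - (of_nat k :: 'q)) < e/2" using M by linarith
    then have "absQ (z - of_nat k) < e"
      using av_tri_sub[OF av, of z "of_nat k" "of_rat r"] r d by linarith
    then show ?thesis by blast
  qed
qed



definition cont_at :: "('a \<Rightarrow> real) \<Rightarrow> ('b \<Rightarrow> real) \<Rightarrow> ('a::ab_group_add \<Rightarrow> 'b::ab_group_add) \<Rightarrow> 'a \<Rightarrow> bool" where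
  "cont_at avA avB F x0 \<longleftrightarrow> (\<forall>e>0. \<exists>d>0. \<forall>y. avA (y - x0) < d \<longrightarrow> avB (F y - F x0) < e)"

lemma cont_at_const:
  assumes "is_absval (avB :: 'b::field \<Rightarrow> real)"
  shows "cont_at avA avB (\<lambda>_. c) x0"
  unfolding cont_at_def using av_zero[OF assms] by (auto intro: exI[of _ 1])

lemma cont_at_add:
  assumes B: "is_absval (avB :: 'b::field \<Rightarrow> real)"
    and F: "cont_at avA avB F x0" and G: "cont_at avA avB G x0"
  shows "cont_at avA avB (\<lambda>y. F y + G y) x0"
  unfolding cont_at_def
proof (intro allI impI)
  fix e :: real assume e: "e > 0"
  obtain d1 where d1: "d1 > 0" "\<forall>y. avA (y - x0) < d1 \<longrightarrow> avB (F y - F x0) < e/2"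
    using F e unfolding cont_at_def by (meson half_gt_zero)
  obtain d2 where d2: "d2 > 0" "\<forall>y. avA (y - x0) < d2 \<longrightarrow> avB (G y - G x0) < e/2"
    using G e unfolding cont_at_def by (meson half_gt_zero)
  show "\<exists>d>0. \<forall>y. avA (y - x0) < d \<longrightarrow> avB (F y + G y - (F x0 + G x0)) < e"
  proof (intro exI[of _ "min d1 d2"] conjI allI impI)
    show "min d1 d2 > 0" using d1 d2 by simp
    fix y assume "avA (y - x0) < min d1 d2"
    then have "avB (F y - F x0) < e/2" "avB (G y - G x0) < e/2" using d1 d2 by auto
    moreover have "avB (F y + G y - (F x0 + G x0)) \<le> avB (F y - F x0) + avB (G y - G x0)"
      using av_tri[OF B, of "F y - F x0" "G y - G x0"] by (simp add: algebra_simps)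
    ultimately show "avB (F y + G y - (F x0 + G x0)) < e" by linarith
  qed
qed

lemma cont_at_mult:
  assumes B: "is_absval (avB :: 'b::field \<Rightarrow> real)"
    and F: "cont_at avA avB F x0" and G: "cont_at avA avB G x0"
  shows "cont_at avA avB (\<lambda>y. F y * G y) x0"
  unfolding cont_at_def
proof (intro allI impI)
  fix e :: real assume e: "e > 0"
  define a where "a = avB (F x0) + 1"
  define b where "b = avB (G x0) + 1"
  have a: "a \<ge> 1" and b: "b \<ge> 1" using av_nonneg[OF B] by (auto simp: a_def b_def)
  have e1: "min 1 (e / (2*b)) > 0" and e2: "e / (2*a) > 0" using e a b by auto
  obtain d1 where d1: "d1 > 0" "\<forall>y. avA (y - x0) < d1 \<longrightarrow> avB (F y - F x0) < min 1 (e / (2*b))"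
    using F e1 unfolding cont_at_def by blast
  obtain d2 where d2: "d2 > 0" "\<forall>y. avA (y - x0) < d2 \<longrightarrow> avB (G y - G x0) < e / (2*a)"
    using G e2 unfolding cont_at_def by blast
  show "\<exists>d>0. \<forall>y. avA (y - x0) < d \<longrightarrow> avB (F y * G y - F x0 * G x0) < e"
  proof (intro exI[of _ "min d1 d2"] conjI allI impI)
    show "min d1 d2 > 0" using d1 d2 by simp
    fix y assume "avA (y - x0) < min d1 d2"
    then have f1: "avB (F y - F x0) < 1" and f2: "avB (F y - F x0) < e / (2*b)"
      and g1: "avB (G y - G x0) < e / (2*a)" using d1 d2 by auto
    have "avB (F y) \<le> avB (F y - F x0) + avB (F x0)"
      using av_tri[OF B, of "F y - F x0" "F x0"] by simp
    then have Fy: "avB (F y) \<le> a" using f1 unfolding a_def by linarith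
    have eq: "F y * G y - F x0 * G x0 = F y * (G y - G x0) + (F y - F x0) * G x0"
      by (simp add: algebra_simps)
    have "avB (F y * G y - F x0 * G x0) \<le> avB (F y) * avB (G y - G x0) + avB (F y - F x0) * avB (G x0)"
      unfolding eq using av_tri[OF B] av_mult[OF B] by metis
    moreover have "avB (F y) * avB (G y - G x0) < e/2"
    proof -
      have "avB (F y) * avB (G y - G x0) \<le> a * avB (G y - G x0)"
        using Fy av_nonneg[OF B] by (intro mult_right_mono) auto
      also have "\<dots> < a * (e / (2*a))" using g1 a by (intro mult_strict_left_mono) auto
      also have "\<dots> = e/2" using a by (simp add: field_simps)
      finally show ?thesis .
    qed
    moreover have "avB (F y - F x0) * avB (G x0) \<le> e/2"
    proof -
      have "avB (F y - F x0) * avB (G x0) \<le> (e / (2*b)) * b"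
        using f2 av_nonneg[OF B] e2 e1 by (intro mult_mono) (auto simp: b_def)
      also have "\<dots> = e/2" using b by (simp add: field_simps)
      finally show ?thesis .
    qed
    ultimately show "avB (F y * G y - F x0 * G x0) < e" by linarith
  qed
qed



lemma cont_at_poly:
  assumes B: "is_absval (avB :: 'b::field \<Rightarrow> real)"
    and I: "cont_at avA avB incl x0"
  shows "cont_at avA avB (\<lambda>y. poly P (incl y)) x0"
proof (induction P)
  case 0
  then show ?case using cont_at_const[OF B] by simp
next
  case (pCons c P)
  have "cont_at avA avB (\<lambda>y. c + incl y * poly P (incl y)) x0"
    by (intro cont_at_add[OF B] cont_at_const[OF B] cont_at_mult[OF B] I pCons.IH)
  then show ?case by simp
qed

lemma poly_sum_n:
  fixes Q :: "'k::field poly"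
  assumes "degree Q \<le> n"
  shows "poly Q y = (\<Sum>i\<le>n. coeff Q i * y ^ i)"
proof -
  have "poly Q y = (\<Sum>i\<le>degree Q. coeff Q i * y ^ i)" by (rule poly_altdef)
  also have "\<dots> = (\<Sum>i\<le>n. coeff Q i * y ^ i)"
    by (rule sum.mono_neutral_left) (use assms in \<open>auto simp: coeff_eq_0\<close>)
  finally show ?thesis .
qed

lemma embed_facts:
  assumes "field_embedding (incl :: 'q::field_char_0 \<Rightarrow> 'k::field)"
  shows emb_add: "incl (x + y) = incl x + incl y" and emb_mult: "incl (x * y) = incl x * incl y"
    and emb_0: "incl 0 = 0" and emb_nat: "incl (of_nat m) = of_nat m"
    and emb_minus: "incl (x - y) = incl x - incl y"
    and emb_pow: "incl (x ^ m) = incl x ^ m"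
    and emb_char: "(of_nat (Suc m) :: 'k) \<noteq> 0"
proof -
  note E = assms[unfolded field_embedding_def]
  show A: "incl (x + y) = incl x + incl y" "incl (x * y) = incl x * incl y" using E by auto
  have "incl 0 = incl 0 + incl 0" using E by (metis add_0)
  then have "incl 0 + 0 = incl 0 + incl 0" by simp
  then show Z: "incl 0 = 0" by (simp only: add_left_cancel)
  show N: "incl (of_nat m) = of_nat m" for m
    by (induction m) (use E Z in auto)
  have "incl (x - y) + incl y = incl x" using E by (metis diff_add_cancel)
  then show "incl (x - y) = incl x - incl y" by (simp add: eq_diff_eq)
  show "incl (x ^ m) = incl x ^ m" by (induction m) (use E in auto)
  have "incl (of_nat (Suc m)) \<noteq> incl 0" using E by (metis inj_eq of_nat_neq_0)
  then show "(of_nat (Suc m) :: 'k) \<noteq> 0" using N[of "Suc m"] Z by (simp del: of_nat_Suc)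
qed



theorem corollary7:
  fixes p N n :: nat
    and absQ :: "'q::field_char_0 \<Rightarrow> real"
    and absK :: "'k::field \<Rightarrow> real"
    and incl :: "'q \<Rightarrow> 'k"
    and f :: "'q \<Rightarrow> 'k"
  assumes "prime p"
    and "is_padic_field p absQ"
    and "is_absval absK"
    and "field_embedding incl"
    and "abs_continuous absQ absK incl"
    and "abs_continuous absQ absK f"
    and "\<forall>x. fdiff ((of_nat p :: 'q) ^ N) (n + 1) f x = 0"
  shows "\<forall>a. \<exists>c :: nat \<Rightarrow> 'k. \<forall>x.
           (\<exists>z. absQ z \<le> 1 \<and> x = a + (of_nat p) ^ N * z) \<longrightarrow>
           f x = (\<Sum>i\<le>n. c i * (incl x) ^ i)"
proof
  fix a :: 'q
  note P = assms(1) and Q = assms(2) and K = assms(3) and E = assms(4)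
  have avQ: "is_absval absQ" using Q by (simp add: is_padic_field_def)
  define h :: 'q where "h = of_nat p ^ N"
  define g where "g j = f (a + of_nat j * h)" for j
  have "DD (Suc n) g j = 0" for j
  proof -
    have "DD (Suc n) g j = fdiff h (n + 1) f (a + of_nat j * h)"
      unfolding DD_def fdiff_def g_def atLeast0AtMost
      by (simp add: algebra_simps)
    then show ?thesis using assms(7) h_def by simp
  qed
  then obtain c where c: "\<forall>j. g j = (\<Sum>i\<le>n. c i * of_nat (j choose i))"
    using DD_zero_binom by blast
  have "\<forall>i. \<exists>B :: 'k poly. degree B \<le> i \<and> (\<forall>k. poly B (of_nat k) = of_nat (k choose i))"
    using binom_poly emb_char[OF E] by blast
  then obtain B where B: "\<And>i. degree (B i) \<le> i" "\<And>i k. poly (B i) (of_nat k) = (of_nat (k choose i) :: 'k)"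
    by metis
  define PP where "PP = (\<Sum>i\<le>n. smult (c i) (B i))"
  have degPP: "degree PP \<le> n" unfolding PP_def
  proof (rule degree_sum_le)
    fix i assume "i \<in> {..n}"
    then show "degree (smult (c i) (B i)) \<le> n" using B(1)[of i] degree_smult_le[of "c i" "B i"] by simp
  qed simp
  have gPP: "g j = poly PP (of_nat j)" for j
    using c B(2) by (simp add: PP_def poly_sum)
  have hne: "incl h \<noteq> 0"
  proof -
    have "p > 0" using P prime_gt_0_nat by blast
    then obtain p' where "p = Suc p'" using gr0_implies_Suc by blast
    then have "incl (of_nat p) \<noteq> 0" using emb_nat[OF E] emb_char[OF E, of p'] by (simp del: of_nat_Suc)
    then show ?thesis unfolding h_def emb_pow[OF E] by simp
  qed
  define QQ where "QQ = pcompose PP [: - incl a / incl h, 1 / incl h :]"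
  have degQQ: "degree QQ \<le> n" unfolding QQ_def
    using degree_pcompose_le[of PP "[: - incl a / incl h, 1 / incl h :]"] degPP hne
    by (simp add: degree_pCons_eq_if split: if_splits)
  have fQQ: "f (a + of_nat j * h) = poly QQ (incl (a + of_nat j * h))" for j
  proof -
    have "incl (a + of_nat j * h) = incl a + of_nat j * incl h"
      using emb_add[OF E] emb_mult[OF E] emb_nat[OF E] by simp
    then have "(- incl a / incl h) + incl (a + of_nat j * h) * (1 / incl h) = of_nat j"
      using hne by (simp add: field_simps)
    then show ?thesis using gPP[of j] unfolding g_def QQ_def by (simp add: poly_pcompose)
  qed
  have cI: "cont_at absQ absK incl x" for x
    using assms(5) unfolding abs_continuous_def cont_at_def by blast
  have cf: "cont_at absQ absK f x" for x
    using assms(6) unfolding abs_continuous_def cont_at_def by blast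
  have main: "f x = poly QQ (incl x)" if z: "absQ z \<le> 1" and x: "x = a + h * z" for x z
  proof (rule ccontr)
    assume ne: "f x \<noteq> poly QQ (incl x)"
    define e where "e = absK (f x - poly QQ (incl x)) / 2"
    have e: "e > 0" using ne av_nonneg[OF K] av_eq0[OF K] unfolding e_def
      by (metis eq_iff_diff_eq_0 half_gt_zero less_eq_real_def)
    obtain d1 where d1: "d1 > 0" "\<forall>y. absQ (y - x) < d1 \<longrightarrow> absK (f y - f x) < e"
      using cf[of x] e unfolding cont_at_def by blast
    obtain d2 where d2: "d2 > 0" "\<forall>y. absQ (y - x) < d2 \<longrightarrow> absK (poly QQ (incl y) - poly QQ (incl x)) < e"
      using cont_at_poly[OF K cI[of x], where P=QQ] e unfolding cont_at_def by blast
    obtain k where k: "absQ (z - of_nat k) < min d1 d2"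
      using absQ_density[OF P Q z, of "min d1 d2"] d1 d2 by auto
    define y where "y = a + of_nat k * h"
    have "absQ h \<le> 1" unfolding h_def using absQ_int_le1[OF P Q, of "int p ^ N"] by simp
    have "absQ (y - x) = absQ h * absQ (z - of_nat k)"
      unfolding y_def x using av_mult[OF avQ, of h "z - of_nat k"] av_sub_comm[OF avQ]
      by (simp add: algebra_simps)
    also have "\<dots> \<le> absQ (z - of_nat k)"
      using \<open>absQ h \<le> 1\<close> av_nonneg[OF avQ] by (simp add: mult_left_le_one_le)
    finally have yx: "absQ (y - x) < min d1 d2" using k by linarith
    have A1: "absK (f y - f x) < e" using d1 yx by auto
    have A2: "absK (poly QQ (incl y) - poly QQ (incl x)) < e" using d2 yx by auto
    have fy: "f y = poly QQ (incl y)" unfolding y_def by (rule fQQ)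
    have "absK (f x - poly QQ (incl x)) \<le> absK (f x - f y) + absK (f y - poly QQ (incl x))"
      by (rule av_tri_sub[OF K])
    also have "absK (f x - f y) = absK (f y - f x)" by (rule av_sub_comm[OF K])
    moreover have "absK (f y - poly QQ (incl x)) < e" using A2 fy by simp
    ultimately have "absK (f x - poly QQ (incl x)) < 2 * e" using A1 by linarith
    then show False unfolding e_def by linarith
  qed
  show "\<exists>c :: nat \<Rightarrow> 'k. \<forall>x. (\<exists>z. absQ z \<le> 1 \<and> x = a + (of_nat p) ^ N * z) \<longrightarrow>
           f x = (\<Sum>i\<le>n. c i * (incl x) ^ i)"
  proof (intro exI[of _ "coeff QQ"] allI impI)
    fix x assume "\<exists>z. absQ z \<le> 1 \<and> x = a + (of_nat p) ^ N * z"
    then obtain z where "absQ z \<le> 1" "x = a + h * z" unfolding h_def by blast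
    then have "f x = poly QQ (incl x)" by (rule main)
    then show "f x = (\<Sum>i\<le>n. coeff QQ i * (incl x) ^ i)" using poly_sum_n[OF degQQ] by simp
  qed
qed

end
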